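(* Let $A = (a_{ij}) \in \mathbb{R}^{p \times n}$, let $1 \leq k \leq p$, let $l, u \in \mathbb{R}^n$ with $l_j \leq u_j$ for all $j$, let $P \subseteq \{1, \ldots, p\}$ with $|P| \geq k$, and let $\beta \in [0,1]^n$. Then for all $x \in \mathbb{R}^n$ with $l_j \leq x_j \leq u_j$ for all $j$, $$Q_k(Ax) \geq \sum_{j=1}^n (1 - \beta_j)\left(\min_{i \in P} a_{ij}\right)(x_j - l_j) + \sum_{j=1}^n \beta_j \left(\max_{i \in P} a_{ij}\right)(x_j - u_j) + \min_{i \in P}\sum_{j=1}^n (1 - \beta_j) a_{ij} l_j + \min_{i \in P}\sum_{j=1}^n \beta_j a_{ij} u_j.$$
   Context: For $y \in \mathbb{R}^p$ and an integer $1 \leq k \leq p$, $Q_k(y)$ denotes the $k$-th largest entry of $y$ (entries counted with multiplicity). *)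

theory Defs
  imports "HOL-Analysis.Analysis" "HOL-Library.Multiset"
begin

text \<open>The k-th largest entry (1-based, counted with multiplicity) of a vector y in R^p,
  where the index set is the finite type 'p.\<close>
definition kth_largest :: "nat \<Rightarrow> real ^ 'p \<Rightarrow> real" where
  "kth_largest k y =
     rev (sorted_list_of_multiset (image_mset (\<lambda>i. y $ i) (mset_set (UNIV :: 'p set)))) ! (k - 1)"

end

theory Submission
  imports Defs
begin

lemma kth_ge:
  fixes y :: "real ^ 'p" and P :: "'p set"
  assumes k1: "1 \<le> k" and kP: "card P \<ge> k" and ge: "\<forall>i\<in>P. R \<le> y $ i"
  shows "R \<le> kth_largest k y"
proof -
  define M where "M = image_mset (\<lambda>i. y $ i) (mset_set (UNIV :: 'p set))"
  define s where "s = sorted_list_of_multiset M"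
  define N where "N = length s"
  have sorted: "sorted s" unfolding s_def by simp
  have ms: "mset s = M" unfolding s_def by simp
  have "size M = CARD('p)" unfolding M_def by simp
  hence N: "N = CARD('p)" unfolding N_def using ms by (metis size_mset)
  have cP: "card P \<le> CARD('p)" by (simp add: card_mono)
  have kN: "k \<le> N" using kP cP N by simp
  have kth: "kth_largest k y = s ! (N - k)"
    unfolding kth_largest_def M_def[symmetric] s_def[symmetric] N_def
    using k1 kN by (simp add: rev_nth N_def)
  have cnt: "length (filter (\<lambda>v. R \<le> v) s) \<ge> k"
  proof -
    have "length (filter (\<lambda>v. R \<le> v) s) = size (filter_mset (\<lambda>v. R \<le> v) M)"
      by (metis ms mset_filter size_mset)
    also have "\<dots> = card {i. R \<le> y $ i}"
      unfolding M_def filter_mset_image_mset by (simp add: filter_mset_mset_set)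
    also have "\<dots> \<ge> card P" using ge by (intro card_mono) auto
    finally show ?thesis using kP by simp
  qed
  show ?thesis
  proof (rule ccontr)
    assume "\<not> R \<le> kth_largest k y"
    hence lt: "s ! (N - k) < R" using kth by simp
    have "{i. i < N \<and> R \<le> s ! i} \<subseteq> {N - k + 1..<N}"
    proof
      fix i assume "i \<in> {i. i < N \<and> R \<le> s ! i}"
      hence i: "i < N" "R \<le> s ! i" by auto
      have "\<not> i \<le> N - k"
      proof
        assume "i \<le> N - k"
        hence "s ! i \<le> s ! (N - k)" using sorted kN k1 N_def
          by (intro sorted_nth_mono) auto
        thus False using i lt by simp
      qed
      thus "i \<in> {N - k + 1..<N}" using i by auto
    qed
    hence "card {i. i < N \<and> R \<le> s ! i} \<le> card {N - k + 1..<N}"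
      by (intro card_mono) auto
    also have "\<dots> = k - 1" using kN k1 by simp
    finally show False using cnt length_filter_conv_card[of "\<lambda>v. R \<le> v" s] k1 N_def by simp
  qed
qed

theorem theorem9:
  fixes A :: "real ^ 'n ^ 'p" and k :: nat and l u x \<beta> :: "real ^ 'n" and P :: "'p set"
  assumes "1 \<le> k" and "k \<le> CARD('p)"
    and "\<forall>j. l $ j \<le> u $ j"
    and "card P \<ge> k"
    and "\<forall>j. 0 \<le> \<beta> $ j \<and> \<beta> $ j \<le> 1"
    and "\<forall>j. l $ j \<le> x $ j \<and> x $ j \<le> u $ j"
  shows "kth_largest k (A *v x) \<ge>
      (\<Sum>j\<in>UNIV. (1 - \<beta> $ j) * Min ((\<lambda>i. A $ i $ j) ` P) * (x $ j - l $ j))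
    + (\<Sum>j\<in>UNIV. \<beta> $ j * Max ((\<lambda>i. A $ i $ j) ` P) * (x $ j - u $ j))
    + Min ((\<lambda>i. \<Sum>j\<in>UNIV. (1 - \<beta> $ j) * A $ i $ j * l $ j) ` P)
    + Min ((\<lambda>i. \<Sum>j\<in>UNIV. \<beta> $ j * A $ i $ j * u $ j) ` P)"
proof -
  have fP: "finite P" by simp
  have neP: "P \<noteq> {}" using assms(1,4) by auto
  show ?thesis
  proof (rule kth_ge[OF assms(1,4)], intro ballI)
    fix i assume iP: "i \<in> P"
    have t1: "(1 - \<beta> $ j) * Min ((\<lambda>i. A $ i $ j) ` P) * (x $ j - l $ j)
            \<le> (1 - \<beta> $ j) * A $ i $ j * (x $ j - l $ j)" for j
    proof -
      have "Min ((\<lambda>i. A $ i $ j) ` P) \<le> A $ i $ j" using iP fP by simp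
      moreover have "0 \<le> (1 - \<beta> $ j) * (x $ j - l $ j)" using assms(5,6)
        by (simp add: mult_nonneg_nonneg)
      ultimately have "((1 - \<beta> $ j) * (x $ j - l $ j)) * Min ((\<lambda>i. A $ i $ j) ` P)
          \<le> ((1 - \<beta> $ j) * (x $ j - l $ j)) * A $ i $ j" by (rule mult_left_mono)
      thus ?thesis by (simp only: ac_simps)
    qed
    have t2: "\<beta> $ j * Max ((\<lambda>i. A $ i $ j) ` P) * (x $ j - u $ j)
            \<le> \<beta> $ j * A $ i $ j * (x $ j - u $ j)" for j
    proof -
      have "A $ i $ j \<le> Max ((\<lambda>i. A $ i $ j) ` P)" using iP fP by simp
      moreover have "\<beta> $ j * (x $ j - u $ j) \<le> 0" using assms(5,6)
        by (simp add: mult_nonneg_nonpos)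
      ultimately have "(\<beta> $ j * (x $ j - u $ j)) * Max ((\<lambda>i. A $ i $ j) ` P)
          \<le> (\<beta> $ j * (x $ j - u $ j)) * A $ i $ j" by (rule mult_left_mono_neg)
      thus ?thesis by (simp only: ac_simps)
    qed
    have t3: "Min ((\<lambda>i. \<Sum>j\<in>UNIV. (1 - \<beta> $ j) * A $ i $ j * l $ j) ` P)
        \<le> (\<Sum>j\<in>UNIV. (1 - \<beta> $ j) * A $ i $ j * l $ j)" using iP fP by simp
    have t4: "Min ((\<lambda>i. \<Sum>j\<in>UNIV. \<beta> $ j * A $ i $ j * u $ j) ` P)
        \<le> (\<Sum>j\<in>UNIV. \<beta> $ j * A $ i $ j * u $ j)" using iP fP by simp
    have s1: "(\<Sum>j\<in>UNIV. (1 - \<beta> $ j) * Min ((\<lambda>i. A $ i $ j) ` P) * (x $ j - l $ j))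
       \<le> (\<Sum>j\<in>UNIV. (1 - \<beta> $ j) * A $ i $ j * (x $ j - l $ j))"
      by (intro sum_mono t1)
    have s2: "(\<Sum>j\<in>UNIV. \<beta> $ j * Max ((\<lambda>i. A $ i $ j) ` P) * (x $ j - u $ j))
       \<le> (\<Sum>j\<in>UNIV. \<beta> $ j * A $ i $ j * (x $ j - u $ j))"
      by (intro sum_mono t2)
    have "(\<Sum>j\<in>UNIV. (1 - \<beta> $ j) * Min ((\<lambda>i. A $ i $ j) ` P) * (x $ j - l $ j))
    + (\<Sum>j\<in>UNIV. \<beta> $ j * Max ((\<lambda>i. A $ i $ j) ` P) * (x $ j - u $ j))
    + Min ((\<lambda>i. \<Sum>j\<in>UNIV. (1 - \<beta> $ j) * A $ i $ j * l $ j) ` P)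
    + Min ((\<lambda>i. \<Sum>j\<in>UNIV. \<beta> $ j * A $ i $ j * u $ j) ` P)
      \<le> (\<Sum>j\<in>UNIV. (1 - \<beta> $ j) * A $ i $ j * (x $ j - l $ j))
    + (\<Sum>j\<in>UNIV. \<beta> $ j * A $ i $ j * (x $ j - u $ j))
    + (\<Sum>j\<in>UNIV. (1 - \<beta> $ j) * A $ i $ j * l $ j)
    + (\<Sum>j\<in>UNIV. \<beta> $ j * A $ i $ j * u $ j)"
      using s1 s2 t3 t4 by linarith
    also have "\<dots> = (\<Sum>j\<in>UNIV. (1 - \<beta> $ j) * A $ i $ j * (x $ j - l $ j)
       + \<beta> $ j * A $ i $ j * (x $ j - u $ j) + (1 - \<beta> $ j) * A $ i $ j * l $ j
       + \<beta> $ j * A $ i $ j * u $ j)"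
      by (simp only: sum.distrib)
    also have "\<dots> = (\<Sum>j\<in>UNIV. A $ i $ j * x $ j)"
      by (rule sum.cong) (simp_all add: algebra_simps)
    also have "\<dots> = (A *v x) $ i" by (simp add: matrix_vector_mult_def)
    finally show "(\<Sum>j\<in>UNIV. (1 - \<beta> $ j) * Min ((\<lambda>i. A $ i $ j) ` P) * (x $ j - l $ j))
    + (\<Sum>j\<in>UNIV. \<beta> $ j * Max ((\<lambda>i. A $ i $ j) ` P) * (x $ j - u $ j))
    + Min ((\<lambda>i. \<Sum>j\<in>UNIV. (1 - \<beta> $ j) * A $ i $ j * l $ j) ` P)
    + Min ((\<lambda>i. \<Sum>j\<in>UNIV. \<beta> $ j * A $ i $ j * u $ j) ` P) \<le> (A *v x) $ i" .
  qed
qed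

end
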